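(* Let $R>\pi$, $\varepsilon\in(0,1)$, $C>0$, and let $\phi\in C^0([0,R])$ satisfy $\phi(0)=\phi(R)=0$ and $\phi>0$ in $(0,R)$. Then there exists $\bar b>1$ such that the solution $\psi$ of $$-\psi''=\psi(1-\bar b\phi-\psi)\ \text{ in }(0,R),\qquad \psi(0)=\psi(R)=1-\varepsilon,$$ satisfies $\psi<1-\varepsilon$ in $(0,R)$, $\psi'(0)<-C$ and $\psi'(R)>C$.
   Context: Here "the solution" refers to the classical solution with values in $[0,1]$ obtained by the monotone (sub/supersolution) method, using $0$ and $1$ as sub- and supersolution. *)

theory Defs
  imports "HOL-Analysis.Analysis"
begin

definition is_sol :: "real \<Rightarrow> real \<Rightarrow> (real \<Rightarrow> real) \<Rightarrow> real \<Rightarrow> (real \<Rightarrow> real) \<Rightarrow> (real \<Rightarrow> real) \<Rightarrow> bool" where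
  "is_sol R b \<phi> \<epsilon> \<psi> d\<psi> \<longleftrightarrow>
     (\<forall>x\<in>{0..R}. (\<psi> has_real_derivative d\<psi> x) (at x within {0..R})) \<and>
     (\<forall>x\<in>{0<..<R}. (d\<psi> has_real_derivative (- (\<psi> x * (1 - b * \<phi> x - \<psi> x)))) (at x)) \<and>
     (\<forall>x\<in>{0..R}. 0 \<le> \<psi> x \<and> \<psi> x \<le> 1) \<and>
     \<psi> 0 = 1 - \<epsilon> \<and> \<psi> R = 1 - \<epsilon>"

end

theory Submission imports Defs begin

lemma TL:
  fixes f f' f'' :: "real \<Rightarrow> real"
  assumes pq: "p < q"
    and d1: "\<And>x. x \<in> {p..q} \<Longrightarrow> (f has_real_derivative f' x) (at x within {p..q})"
    and d2: "\<And>x. x \<in> {p<..<q} \<Longrightarrow> (f' has_real_derivative f'' x) (at x)"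
    and c: "\<And>x. x \<in> {p<..<q} \<Longrightarrow> c \<le> f'' x"
  shows "\<And>x. x \<in> {p..q} \<Longrightarrow> f p + f' p * (x - p) + c * (x - p)^2 / 2 \<le> f x"
    and "\<And>x. x \<in> {p..<q} \<Longrightarrow> f' p + c * (x - p) \<le> f' x"
proof -
  define h where "h x = f x - f p - f' p * (x - p) - c * (x - p)^2 / 2" for x
  define h' where "h' x = f' x - f' p - c * (x - p)" for x
  have dh: "(h has_real_derivative h' x) (at x within {p..q})" if "x \<in> {p..q}" for x
    unfolding h_def h'_def using d1[OF that]
    by (auto intro!: derivative_eq_intros simp: power2_eq_square field_simps)
  have dhat: "(h has_real_derivative h' x) (at x)" if "x \<in> {p<..<q}" for x
    using dh[of x] that at_within_Icc_at[of p x q] by auto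
  have dh': "(h' has_real_derivative (f'' x - c)) (at x)" if "x \<in> {p<..<q}" for x
    unfolding h'_def using d2[OF that]
    by (auto intro!: derivative_eq_intros)
  have hcont: "continuous_on {p..q} h"
    using dh DERIV_continuous_on by blast
  have mono: "h' u \<le> h' v" if "p < u" "u \<le> v" "v < q" for u v
  proof (rule DERIV_nonneg_imp_increasing_open[OF that(2)])
    fix x assume "u < x" "x < v"
    then show "\<exists>y. (h' has_real_derivative y) (at x) \<and> 0 \<le> y"
      using dh'[of x] c[of x] that by force
  next
    show "continuous_on {u..v} h'"
    proof (intro continuous_at_imp_continuous_on ballI)
      fix x assume "x \<in> {u..v}"
      then show "isCont h' x" using dh'[of x] that by (intro DERIV_isCont) force
    qed
  qed
  have hp: "h p = 0" "h' p = 0" unfolding h_def h'_def by auto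
  have h'nonneg: "0 \<le> h' y" if y: "y \<in> {p<..<q}" for y
  proof (rule ccontr)
    assume "\<not> 0 \<le> h' y"
    hence neg: "h' y < 0" by simp
    have quot: "(h t - h p)/(t - p) \<le> h' y" if "p < t" "t < y" for t
    proof -
      have "h' y * p - h p \<le> h' y * t - h t"
      proof (rule DERIV_nonneg_imp_increasing_open[of p t "\<lambda>x. h' y * x - h x"])
        show "p \<le> t" using that by simp
        fix x assume "p < x" "x < t"
        then show "\<exists>z. ((\<lambda>x. h' y * x - h x) has_real_derivative z) (at x) \<and> 0 \<le> z"
          using that y mono[of x y] dhat[of x]
          by (intro exI[of _ "h' y - h' x"]) (auto intro!: derivative_eq_intros)
      next
        show "continuous_on {p..t} (\<lambda>x. h' y * x - h x)"
          using that y by (intro continuous_intros continuous_on_subset[OF hcont]) auto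
      qed
      then show ?thesis using that by (simp add: pos_divide_le_eq algebra_simps)
    qed
    have lim: "((\<lambda>t. (h t - h p)/(t - p)) \<longlongrightarrow> h' p) (at_right p)"
      using dh[of p] pq by (simp add: has_field_derivative_iff at_within_Icc_at_right)
    have "h' p \<le> h' y"
    proof (rule tendsto_upperbound[OF lim])
      show "\<forall>\<^sub>F t in at_right p. (h t - h p) / (t - p) \<le> h' y"
        unfolding eventually_at_right_field using y quot by (intro exI[of _ y]) auto
    qed simp
    then show False using hp neg by simp
  qed
  show "f p + f' p * (x - p) + c * (x - p)^2 / 2 \<le> f x" if "x \<in> {p..q}" for x
  proof -
    have "h p \<le> h x"
    proof (rule DERIV_nonneg_imp_increasing_open[of p x h])
      show "p \<le> x" using that by simp
      fix z assume "p < z" "z < x"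
      then show "\<exists>y. (h has_real_derivative y) (at z) \<and> 0 \<le> y"
        using that dhat[of z] h'nonneg[of z] by auto
    next
      show "continuous_on {p..x} h" using that by (intro continuous_on_subset[OF hcont]) auto
    qed
    then show ?thesis using hp unfolding h_def by simp
  qed
  show "f' p + c * (x - p) \<le> f' x" if "x \<in> {p..<q}" for x
  proof (cases "x = p")
    case True then show ?thesis by simp
  next
    case False
    then have "0 \<le> h' x" using that h'nonneg[of x] by auto
    then show ?thesis unfolding h'_def by simp
  qed
qed


lemma refl_sol:
  assumes "is_sol R b \<phi> \<epsilon> \<psi> d\<psi>"
  shows "is_sol R b (\<lambda>x. \<phi> (R - x)) \<epsilon> (\<lambda>x. \<psi> (R - x)) (\<lambda>x. - d\<psi> (R - x))"
proof -
  from assms have D1: "\<And>x. x \<in> {0..R} \<Longrightarrow> (\<psi> has_real_derivative d\<psi> x) (at x within {0..R})"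
    and D2: "\<And>x. x \<in> {0<..<R} \<Longrightarrow> (d\<psi> has_real_derivative (- (\<psi> x * (1 - b * \<phi> x - \<psi> x)))) (at x)"
    and B: "\<And>x. x \<in> {0..R} \<Longrightarrow> 0 \<le> \<psi> x \<and> \<psi> x \<le> 1"
    and E: "\<psi> 0 = 1 - \<epsilon>" "\<psi> R = 1 - \<epsilon>"
    unfolding is_sol_def by auto
  have im: "(\<lambda>x. R - x) ` {0..R} = {0..R}" by auto
  have r1: "((\<lambda>x. \<psi> (R - x)) has_real_derivative - d\<psi> (R - x)) (at x within {0..R})"
    if "x \<in> {0..R}" for x
  proof -
    have "(\<psi> has_real_derivative d\<psi> (R - x)) (at (R - x) within ((\<lambda>x. R - x) ` {0..R}))"
      unfolding im using D1[of "R - x"] that by auto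
    moreover have "((\<lambda>x. R - x) has_real_derivative -1) (at x within {0..R})"
      by (auto intro!: derivative_eq_intros)
    ultimately have "(\<psi> \<circ> (\<lambda>x. R - x) has_real_derivative d\<psi> (R - x) * -1) (at x within {0..R})"
      by (rule DERIV_image_chain)
    then show ?thesis by (simp add: o_def)
  qed
  have r2: "((\<lambda>x. - d\<psi> (R - x)) has_real_derivative
      - (\<psi> (R - x) * (1 - b * \<phi> (R - x) - \<psi> (R - x)))) (at x)" if "x \<in> {0<..<R}" for x
  proof -
    have "(d\<psi> has_real_derivative (- (\<psi> (R - x) * (1 - b * \<phi> (R - x) - \<psi> (R - x))))) (at (R - x))"
      using D2[of "R - x"] that by auto
    moreover have "((\<lambda>x. R - x) has_real_derivative -1) (at x)"
      by (auto intro!: derivative_eq_intros)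
    ultimately have "((\<lambda>x. d\<psi> (R - x)) has_real_derivative
      (- (\<psi> (R - x) * (1 - b * \<phi> (R - x) - \<psi> (R - x)))) * -1) (at x)"
      by (rule DERIV_chain2)
    from DERIV_minus[OF this] show ?thesis by simp
  qed
  show ?thesis unfolding is_sol_def using r1 r2 B E by auto
qed

lemma core:
  fixes \<phi> \<psi> d\<psi> :: "real \<Rightarrow> real"
  assumes sol: "is_sol R b \<phi> \<epsilon> \<psi> d\<psi>"
    and a: "a = 1 - \<epsilon>" "0 < a" and b: "0 < b"
    and phipos: "\<forall>x\<in>{0<..<R}. \<phi> x > 0"
    and dl: "0 < \<delta>" "4 * \<delta> \<le> R" "2*C*\<delta> + 2*\<delta>^2 \<le> a/2" "0 \<le> C"
    and m: "\<forall>x\<in>{\<delta>..R-\<delta>}. m \<le> \<phi> x" "K \<le> b*m - 1" "0 \<le> K"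
       "1 + C*\<delta> + \<delta>^2 < (a/2)*K*\<delta>^2/2"
    and zz: "0 \<le> zz" "zz \<le> R/2" "a \<le> \<psi> zz" "-C \<le> d\<psi> zz"
  shows False
proof -
  from sol have D1: "\<And>x. x \<in> {0..R} \<Longrightarrow> (\<psi> has_real_derivative d\<psi> x) (at x within {0..R})"
    and D2: "\<And>x. x \<in> {0<..<R} \<Longrightarrow> (d\<psi> has_real_derivative (- (\<psi> x * (1 - b * \<phi> x - \<psi> x)))) (at x)"
    and B: "\<And>x. x \<in> {0..R} \<Longrightarrow> 0 \<le> \<psi> x \<and> \<psi> x \<le> 1"
    unfolding is_sol_def by auto
  define p where "p = max zz \<delta>"
  define q where "q = p + \<delta>"
  have pq: "zz < q" "q \<le> R - \<delta>" "\<delta> \<le> p" "p - zz \<le> \<delta>" "q - zz \<le> 2*\<delta>" "zz \<le> p" "p < q"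
    using dl zz unfolding p_def q_def by auto
  have dd1: "(\<psi> has_real_derivative d\<psi> x) (at x within {u..v})"
    if "x \<in> {u..v}" "0 \<le> u" "v \<le> R" for x u v
    using D1[of x] that by (auto intro: DERIV_subset)
  have c1: "-1 \<le> - (\<psi> x * (1 - b * \<phi> x - \<psi> x))" if "x \<in> {0<..<R}" for x
  proof -
    have "0 \<le> \<psi> x * (b * \<phi> x)" using B[of x] phipos b that
      by (intro mult_nonneg_nonneg) (auto intro: less_imp_le)
    moreover have "0 \<le> \<psi> x * \<psi> x" by simp
    moreover have "- (\<psi> x * (1 - b * \<phi> x - \<psi> x)) = \<psi> x * (b * \<phi> x) + \<psi> x * \<psi> x - \<psi> x"
      by (simp add: algebra_simps)
    moreover have "\<psi> x \<le> 1" using B[of x] that by auto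
    ultimately show ?thesis by linarith
  qed
  note TL1 = TL[of zz q \<psi> d\<psi> "\<lambda>x. - (\<psi> x * (1 - b * \<phi> x - \<psi> x))" "-1"]
  have TL1a: "\<psi> zz + d\<psi> zz * (y - zz) + -1 * (y - zz)^2 / 2 \<le> \<psi> y" if "y \<in> {zz..q}" for y
    using TL1(1)[OF pq(1) _ _ _ that] dd1 D2 c1 pq zz dl by auto
  have TL1b: "d\<psi> zz + -1 * (p - zz) \<le> d\<psi> p"
    using TL1(2)[OF pq(1) _ _ _, of p] dd1 D2 c1 pq zz dl by auto
  have lb: "a/2 \<le> \<psi> y" if "y \<in> {zz..q}" for y
  proof -
    have "-C * (2*\<delta>) \<le> -C * (y - zz)" using that pq dl by (intro mult_left_mono_neg) auto
    moreover have "-C * (y - zz) \<le> d\<psi> zz * (y - zz)" using that zz by (intro mult_right_mono) auto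
    moreover have "(y - zz)^2 \<le> (2*\<delta>)^2" using that pq by (intro power_mono) auto
    ultimately show ?thesis using TL1a[OF that] zz dl by (auto simp: power_mult_distrib)
  qed
  have c2: "(a/2)*K \<le> - (\<psi> x * (1 - b * \<phi> x - \<psi> x))" if "x \<in> {p<..<q}" for x
  proof -
    have x: "x \<in> {\<delta>..R-\<delta>}" "x \<in> {zz..q}" using that pq by auto
    have "b * m \<le> b * \<phi> x" using m(1) x b by (intro mult_left_mono) auto
    then have "K \<le> b * \<phi> x - 1" using m(2) by linarith
    then have "\<psi> x * K \<le> \<psi> x * (b * \<phi> x - 1)" using B[of x] x dl by (intro mult_left_mono) auto
    moreover have "(a/2)*K \<le> \<psi> x * K" using lb[OF x(2)] m by (intro mult_right_mono) auto
    moreover have "- (\<psi> x * (1 - b * \<phi> x - \<psi> x)) = \<psi> x * (b * \<phi> x - 1) + \<psi> x * \<psi> x"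
      by (simp add: algebra_simps)
    moreover have "0 \<le> \<psi> x * \<psi> x" by simp
    ultimately show ?thesis by linarith
  qed
  note TL2 = TL[of p q \<psi> d\<psi> "\<lambda>x. - (\<psi> x * (1 - b * \<phi> x - \<psi> x))" "(a/2)*K"]
  have "\<psi> p + d\<psi> p * (q - p) + (a/2)*K * (q - p)^2 / 2 \<le> \<psi> q"
    using TL2(1)[OF pq(7) _ _ _, of q] dd1 D2 c2 pq zz dl by auto
  moreover have "(-C - \<delta>) * \<delta> \<le> d\<psi> p * (q - p)"
  proof -
    have "d\<psi> zz - (p - zz) \<le> d\<psi> p" using TL1b by simp
    then have "-C - \<delta> \<le> d\<psi> p" using zz(4) pq(4) by linarith
    then show ?thesis using dl unfolding q_def by (simp add: mult_right_mono)
  qed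
  moreover have "a/2 \<le> \<psi> p" using lb pq by auto
  moreover have "\<psi> q \<le> 1" using B[of q] pq dl zz by auto
  ultimately show False using m(4) a(2) unfolding q_def by (auto simp: algebra_simps power2_eq_square)
qed


lemma props:
  fixes \<phi> \<psi> d\<psi> :: "real \<Rightarrow> real"
  assumes sol: "is_sol R b \<phi> \<epsilon> \<psi> d\<psi>"
    and a: "a = 1 - \<epsilon>" "0 < a" and b: "0 < b"
    and phipos: "\<forall>x\<in>{0<..<R}. \<phi> x > 0"
    and dl: "0 < \<delta>" "4 * \<delta> \<le> R" "2*C*\<delta> + 2*\<delta>^2 \<le> a/2" "0 \<le> C"
    and m: "\<forall>x\<in>{\<delta>..R-\<delta>}. m \<le> \<phi> x" "K \<le> b*m - 1" "0 \<le> K"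
       "1 + C*\<delta> + \<delta>^2 < (a/2)*K*\<delta>^2/2"
  shows "(\<forall>x\<in>{0<..<R}. \<psi> x < 1 - \<epsilon>) \<and> d\<psi> 0 < - C \<and> d\<psi> R > C"
proof -
  from sol have D1: "\<And>x. x \<in> {0..R} \<Longrightarrow> (\<psi> has_real_derivative d\<psi> x) (at x within {0..R})"
    and E: "\<psi> 0 = 1 - \<epsilon>" "\<psi> R = 1 - \<epsilon>"
    unfolding is_sol_def by auto
  have R: "0 < R" using dl by auto
  note solr = refl_sol[OF sol]
  have phipos': "\<forall>x\<in>{0<..<R}. (\<lambda>x. \<phi> (R - x)) x > 0" using phipos by auto
  have m': "\<forall>x\<in>{\<delta>..R-\<delta>}. m \<le> (\<lambda>x. \<phi> (R - x)) x" using m(1) by auto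
  note core1 = core[OF sol a b phipos dl m]
  note core2 = core[OF solr a b phipos' dl m' m(2-4)]
  have i: "d\<psi> 0 < - C"
  proof (rule ccontr)
    assume h: "\<not> d\<psi> 0 < - C"
    show False by (rule core1[where zz=0]) (use h E a R in auto)
  qed
  have ii: "d\<psi> R > C"
  proof (rule ccontr)
    assume h: "\<not> d\<psi> R > C"
    show False by (rule core2[where zz=0]) (use h E a R in auto)
  qed
  have iii: "\<psi> x0 < 1 - \<epsilon>" if x0: "x0 \<in> {0<..<R}" for x0
  proof (rule ccontr)
    assume "\<not> \<psi> x0 < 1 - \<epsilon>"
    then have ax0: "a \<le> \<psi> x0" using a by auto
    have "continuous_on {0..R} \<psi>" using D1 DERIV_continuous_on by blast
    then obtain x1 where x1: "x1 \<in> {0..R}" "\<forall>y\<in>{0..R}. \<psi> y \<le> \<psi> x1"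
      using continuous_attains_sup[of "{0..R}" \<psi>] R by auto
    define x2 where "x2 = (if x1 \<in> {0<..<R} then x1 else x0)"
    have x2: "x2 \<in> {0<..<R}" "\<forall>y\<in>{0..R}. \<psi> y \<le> \<psi> x2" "a \<le> \<psi> x2"
    proof -
      show "x2 \<in> {0<..<R}" using x0 unfolding x2_def by auto
      show "\<forall>y\<in>{0..R}. \<psi> y \<le> \<psi> x2"
      proof (cases "x1 \<in> {0<..<R}")
        case True then show ?thesis using x1 unfolding x2_def by auto
      next
        case False
        then have "x1 = 0 \<or> x1 = R" using x1 by auto
        then have "\<psi> x1 = a" using E a by auto
        then show ?thesis using x1 ax0 False unfolding x2_def by auto
      qed
      show "a \<le> \<psi> x2"
        using x1 ax0 x0 unfolding x2_def by (auto dest: bspec[of _ _ x0])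
    qed
    have "d\<psi> x2 = 0"
    proof (rule DERIV_local_max[where f=\<psi> and x=x2 and d="min x2 (R - x2)"])
      show "(\<psi> has_real_derivative d\<psi> x2) (at x2)"
        using D1[of x2] x2(1) at_within_Icc_at[of 0 x2 R] by auto
      show "0 < min x2 (R - x2)" using x2(1) by auto
      show "\<forall>y. \<bar>x2 - y\<bar> < min x2 (R - x2) \<longrightarrow> \<psi> y \<le> \<psi> x2"
        using x2(1,2) by (auto simp: abs_less_iff)
    qed
    show False
    proof (cases "x2 \<le> R/2")
      case True
      show False by (rule core1[where zz=x2]) (use x2 dl \<open>d\<psi> x2 = 0\<close> True in auto)
    next
      case False
      show False by (rule core2[where zz="R - x2"]) (use x2 dl \<open>d\<psi> x2 = 0\<close> False in auto)
    qed
  qed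
  show ?thesis using i ii iii by auto
qed


lemma excursion:
  fixes P dP G :: "real \<Rightarrow> real"
  assumes R: "0 < R"
    and D1: "\<And>x. x \<in> {0..R} \<Longrightarrow> (P has_real_derivative dP x) (at x within {0..R})"
    and D2: "\<And>x. x \<in> {0<..<R} \<Longrightarrow> (dP has_real_derivative G x) (at x)"
    and E: "P 0 \<le> \<theta>" "P R \<le> \<theta>"
    and G: "\<And>x. x \<in> {0<..<R} \<Longrightarrow> P x > \<theta> \<Longrightarrow> 0 \<le> G x"
  shows "\<forall>x\<in>{0..R}. P x \<le> \<theta>"
proof (rule ccontr)
  assume "\<not> (\<forall>x\<in>{0..R}. P x \<le> \<theta>)"
  then obtain x0 where x0: "x0 \<in> {0..R}" "P x0 > \<theta>" by auto
  have cont: "continuous_on {0..R} P" using D1 DERIV_continuous_on by blast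
  then obtain x1 where x1: "x1 \<in> {0..R}" "\<forall>y\<in>{0..R}. P y \<le> P x1"
    using continuous_attains_sup[of "{0..R}" P] R by auto
  have Px1: "P x1 > \<theta>" using x0 x1 by force
  have x1i: "x1 \<in> {0<..<R}" using x1(1) Px1 E by (cases "x1 = 0 \<or> x1 = R") auto
  have dx1: "dP x1 = 0"
  proof (rule DERIV_local_max[where f=P and x=x1 and d="min x1 (R - x1)"])
    show "(P has_real_derivative dP x1) (at x1)"
      using D1[of x1] x1i at_within_Icc_at[of 0 x1 R] by auto
    show "0 < min x1 (R - x1)" using x1i by auto
    show "\<forall>y. \<bar>x1 - y\<bar> < min x1 (R - x1) \<longrightarrow> P y \<le> P x1"
      using x1i x1(2) by (auto simp: abs_less_iff)
  qed
  define S where "S = {x1..R} \<inter> P -` {..\<theta>}"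
  have Sc: "closed S" unfolding S_def
    by (rule continuous_closed_preimage) (use x1 in \<open>auto intro: continuous_on_subset[OF cont]\<close>)
  have RS: "R \<in> S" unfolding S_def using E x1 by auto
  have bb: "bdd_below S" unfolding S_def by (rule bdd_belowI[of _ x1]) auto
  define zt where "zt = Inf S"
  have ztS: "zt \<in> S" unfolding zt_def using closed_contains_Inf[OF _ bb Sc] RS by auto
  have zt1: "x1 \<le> zt" "zt \<le> R" "P zt \<le> \<theta>" using ztS unfolding S_def by auto
  have zt2: "x1 < zt" using zt1 Px1 by (cases "x1 = zt") auto
  have between: "P t > \<theta>" if "t \<in> {x1<..<zt}" for t
  proof (rule ccontr)
    assume "\<not> P t > \<theta>"
    then have "t \<in> S" unfolding S_def using that zt1 by auto
    then have "zt \<le> t" unfolding zt_def using bb by (rule cInf_lower)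
    then show False using that by auto
  qed
  have "P x1 + dP x1 * (zt - x1) + 0 * (zt - x1)^2 / 2 \<le> P zt"
  proof (rule TL(1)[of x1 zt P dP G 0])
    show "x1 < zt" by (rule zt2)
    show "(P has_real_derivative dP x) (at x within {x1..zt})" if "x \<in> {x1..zt}" for x
      using D1[of x] that x1 zt1 by (auto intro: DERIV_subset)
    show "(dP has_real_derivative G x) (at x)" if "x \<in> {x1<..<zt}" for x
      using D2[of x] that x1 zt1 by auto
    show "0 \<le> G x" if "x \<in> {x1<..<zt}" for x
      using G[of x] between[OF that] that x1 zt1 by auto
    show "zt \<in> {x1..zt}" using zt2 by auto
  qed
  then show False using dx1 zt1 Px1 by auto
qed

definition cu :: "real \<Rightarrow> real" where "cu u = max 0 (min 1 u)"
definition FF :: "real \<Rightarrow> (real \<Rightarrow> real) \<Rightarrow> real \<Rightarrow> real \<Rightarrow> real" where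
  "FF b \<phi> t u = - (cu u * (1 - b * \<phi> t - cu u))"

lemma maxp:
  fixes P dP :: "real \<Rightarrow> real"
  assumes R: "0 < R"
    and D1: "\<And>x. x \<in> {0..R} \<Longrightarrow> (P has_real_derivative dP x) (at x within {0..R})"
    and D2: "\<And>x. x \<in> {0<..<R} \<Longrightarrow> (dP has_real_derivative FF b \<phi> x (P x)) (at x)"
    and E: "P 0 = a" "P R = a" "0 \<le> a" "a \<le> 1"
    and phinn: "\<And>x. x \<in> {0..R} \<Longrightarrow> 0 \<le> \<phi> x" and b: "0 \<le> b"
  shows "\<forall>x\<in>{0..R}. 0 \<le> P x \<and> P x \<le> 1"
proof -
  have up: "\<forall>x\<in>{0..R}. P x \<le> 1"
  proof (rule excursion[OF R D1 D2])
    show "P 0 \<le> 1" "P R \<le> 1" using E by auto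
    fix x assume "x \<in> {0<..<R}" "1 < P x"
    then show "0 \<le> FF b \<phi> x (P x)" using phinn[of x] b unfolding FF_def cu_def by auto
  qed
  have lo: "\<forall>x\<in>{0..R}. - P x \<le> 0"
  proof (rule excursion[OF R, of "\<lambda>x. - P x" "\<lambda>x. - dP x" "\<lambda>x. - FF b \<phi> x (P x)"])
    show "((\<lambda>x. - P x) has_real_derivative - dP x) (at x within {0..R})" if "x \<in> {0..R}" for x
      using D1[OF that] by (rule DERIV_minus)
    show "((\<lambda>x. - dP x) has_real_derivative - FF b \<phi> x (P x)) (at x)" if "x \<in> {0<..<R}" for x
      using D2[OF that] by (rule DERIV_minus)
    show "- P 0 \<le> 0" "- P R \<le> 0" using E by auto
    fix x assume "x \<in> {0<..<R}" "0 < - P x"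
    then show "0 \<le> - FF b \<phi> x (P x)" unfolding FF_def cu_def by auto
  qed
  show ?thesis using up lo by auto
qed


lemma cu_facts: "0 \<le> cu u" "cu u \<le> 1" "\<bar>cu u - cu v\<bar> \<le> \<bar>u - v\<bar>"
  "u \<in> {0..1} \<Longrightarrow> cu u = u"
  unfolding cu_def by auto

lemma cu_cont: "continuous_on S cu"
  unfolding cu_def by (intro continuous_intros)

context
  fixes R b a :: real and \<phi> :: "real \<Rightarrow> real" and \<Phi> :: real
  assumes R: "0 < R" and b: "0 \<le> b" and phic: "continuous_on {0..R} \<phi>"
    and phinn: "\<And>t. t \<in> {0..R} \<Longrightarrow> 0 \<le> \<phi> t" and Phi: "\<And>t. t \<in> {0..R} \<Longrightarrow> \<phi> t \<le> \<Phi>"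
begin

definition "LL = 3 + b * \<Phi>"
definition "kk = 2 * R * LL"
definition "cl x = max 0 (min R x)"
definition "GG z t = FF b \<phi> t (exp (kk * t) * apply_bcontfun z t)"
definition "HH s z x = exp (- (kk * x)) * (a + s * x + integral {0..x} (\<lambda>t. (x - t) * GG z t))"
definition "TT s z = Bcontfun (\<lambda>x. HH s z (cl x))"

lemma Phi0: "0 \<le> \<Phi>" using phinn[of 0] Phi[of 0] R by auto

lemma LL3: "3 \<le> LL" unfolding LL_def using b Phi0 by auto

lemma kk_pos: "0 < kk" unfolding kk_def using LL3 R by auto

lemma FF_bd: assumes "t \<in> {0..R}" shows "\<bar>FF b \<phi> t u\<bar> \<le> LL"
proof -
  have "b * \<phi> t \<le> b * \<Phi>" using Phi[OF assms] b by (intro mult_left_mono)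
  moreover have "0 \<le> b * \<phi> t" using phinn[OF assms] b by auto
  ultimately have X: "\<bar>1 - b * \<phi> t - cu u\<bar> \<le> LL" using cu_facts(1,2)[of u] unfolding LL_def by auto
  have "\<bar>FF b \<phi> t u\<bar> = cu u * \<bar>1 - b * \<phi> t - cu u\<bar>"
    unfolding FF_def using cu_facts(1)[of u] by (simp add: abs_mult)
  also have "\<dots> \<le> 1 * LL" using X cu_facts(1,2)[of u] LL3 by (intro mult_mono) auto
  finally show ?thesis by simp
qed

lemma FF_lip: assumes "t \<in> {0..R}" shows "\<bar>FF b \<phi> t u - FF b \<phi> t v\<bar> \<le> LL * \<bar>u - v\<bar>"
proof -
  have "b * \<phi> t \<le> b * \<Phi>" using Phi[OF assms] b by (intro mult_left_mono)
  moreover have "0 \<le> b * \<phi> t" using phinn[OF assms] b by auto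
  ultimately have X: "\<bar>cu u + cu v - 1 + b * \<phi> t\<bar> \<le> LL"
    using cu_facts(1,2)[of u] cu_facts(1,2)[of v] unfolding LL_def by auto
  have "FF b \<phi> t u - FF b \<phi> t v = (cu u - cu v) * (cu u + cu v - 1 + b * \<phi> t)"
    unfolding FF_def by (simp add: algebra_simps)
  then have "\<bar>FF b \<phi> t u - FF b \<phi> t v\<bar> = \<bar>cu u - cu v\<bar> * \<bar>cu u + cu v - 1 + b * \<phi> t\<bar>"
    by (simp add: abs_mult)
  also have "\<dots> \<le> \<bar>u - v\<bar> * LL" using X cu_facts(3)[of u v] by (intro mult_mono) auto
  finally show ?thesis by (simp add: mult.commute)
qed

lemma FF_cont: assumes "continuous_on {0..R} y" shows "continuous_on {0..R} (\<lambda>t. FF b \<phi> t (y t))"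
  unfolding FF_def cu_def using assms phic by (intro continuous_intros)

lemma GG_cont: "continuous_on {0..R} (GG z)"
  unfolding GG_def by (rule FF_cont) (intro continuous_intros continuous_on_apply_bcontfun)

lemma split_int:
  fixes g :: "real \<Rightarrow> real"
  assumes g: "continuous_on {0..R} g" and x: "x \<in> {0..R}"
  shows "integral {0..x} (\<lambda>t. (x - t) * g t) = x * integral {0..x} g - integral {0..x} (\<lambda>t. t * g t)"
proof -
  have c: "continuous_on {0..x} g" by (rule continuous_on_subset[OF g]) (use x in auto)
  have i1: "(\<lambda>t. x * g t) integrable_on {0..x}" using c by (intro integrable_continuous_real continuous_intros)
  have i2: "(\<lambda>t. t * g t) integrable_on {0..x}" using c by (intro integrable_continuous_real continuous_intros)
  have "integral {0..x} (\<lambda>t. (x - t) * g t) = integral {0..x} (\<lambda>t. x * g t - t * g t)"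
    by (simp add: algebra_simps)
  also have "\<dots> = integral {0..x} (\<lambda>t. x * g t) - integral {0..x} (\<lambda>t. t * g t)"
    by (rule integral_diff[OF i1 i2])
  finally show ?thesis by simp
qed

lemma Icont: fixes g :: "real \<Rightarrow> real" assumes "continuous_on {0..R} g" shows "continuous_on {0..R} (\<lambda>x. integral {0..x} g)"
  by (rule indefinite_integral_continuous_1[OF integrable_continuous_real[OF assms]])

lemma Vcont: fixes g :: "real \<Rightarrow> real" assumes g: "continuous_on {0..R} g"
  shows "continuous_on {0..R} (\<lambda>x. integral {0..x} (\<lambda>t. (x - t) * g t))"
proof -
  have "continuous_on {0..R} (\<lambda>x. x * integral {0..x} g - integral {0..x} (\<lambda>t. t * g t))"
    using g by (intro continuous_intros Icont) auto
  then show ?thesis by (rule continuous_on_eq) (use split_int[OF g] in auto)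
qed

lemma HH_cont: "continuous_on {0..R} (HH s z)"
  unfolding HH_def by (intro continuous_intros Vcont GG_cont)

lemma cl_in: "cl x \<in> {0..R}" unfolding cl_def using R by auto
lemma cl_id: "x \<in> {0..R} \<Longrightarrow> cl x = x" unfolding cl_def by auto

lemma HH_bc: "(\<lambda>x. HH s z (cl x)) \<in> bcontfun"
proof -
  have cc: "continuous_on UNIV cl" unfolding cl_def by (intro continuous_intros)
  have "continuous_on UNIV (\<lambda>x. HH s z (cl x))"
    by (rule continuous_on_compose2[OF HH_cont cc]) (use cl_in in auto)
  moreover have "bounded (range (\<lambda>x. HH s z (cl x)))"
  proof -
    have "compact (HH s z ` {0..R})" by (intro compact_continuous_image HH_cont) auto
    then have "bounded (HH s z ` {0..R})" by (rule compact_imp_bounded)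
    then show ?thesis by (rule bounded_subset) (use cl_in in auto)
  qed
  ultimately show ?thesis unfolding bcontfun_def by auto
qed

lemma TT_app: "apply_bcontfun (TT s z) x = HH s z (cl x)"
  unfolding TT_def using HH_bc by (simp add: Bcontfun_inverse)

lemma expint: assumes "0 \<le> x"
  shows "integral {0..x} (\<lambda>t. exp (kk * t)) = (exp (kk * x) - 1) / kk"
proof -
  have "((\<lambda>t. exp (kk * t)) has_integral (exp (kk * x) / kk - exp (kk * 0) / kk)) {0..x}"
  proof (rule fundamental_theorem_of_calculus[OF assms])
    fix t assume "t \<in> {0..x}"
    have "((\<lambda>t. exp (kk * t) / kk) has_real_derivative exp (kk * t)) (at t within {0..x})"
      using kk_pos by (auto intro!: derivative_eq_intros)
    then show "((\<lambda>t. exp (kk * t) / kk) has_vector_derivative exp (kk * t)) (at t within {0..x})"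
      by (simp add: has_real_derivative_iff_has_vector_derivative)
  qed
  then show ?thesis using kk_pos by (auto simp: diff_divide_distrib intro!: integral_unique)
qed

lemma VLip: assumes x: "x \<in> {0..R}"
  shows "\<bar>integral {0..x} (\<lambda>t. (x - t) * GG z1 t) - integral {0..x} (\<lambda>t. (x - t) * GG z2 t)\<bar>
    \<le> R * LL * dist z1 z2 * ((exp (kk * x) - 1) / kk)"
proof -
  define d where "d = dist z1 z2"
  have c1: "continuous_on {0..x} (GG z1)" "continuous_on {0..x} (GG z2)"
    using x by (auto intro: continuous_on_subset[OF GG_cont])
  have i1: "(\<lambda>t. (x - t) * GG z1 t) integrable_on {0..x}" "(\<lambda>t. (x - t) * GG z2 t) integrable_on {0..x}"
    using c1 by (auto intro!: integrable_continuous_real continuous_intros)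
  have "integral {0..x} (\<lambda>t. (x - t) * GG z1 t) - integral {0..x} (\<lambda>t. (x - t) * GG z2 t)
      = integral {0..x} (\<lambda>t. (x - t) * GG z1 t - (x - t) * GG z2 t)"
    by (rule integral_diff[OF i1, symmetric])
  also have "\<dots> = integral {0..x} (\<lambda>t. (x - t) * (GG z1 t - GG z2 t))"
    by (simp add: algebra_simps)
  finally have eq: "integral {0..x} (\<lambda>t. (x - t) * GG z1 t) - integral {0..x} (\<lambda>t. (x - t) * GG z2 t)
      = integral {0..x} (\<lambda>t. (x - t) * (GG z1 t - GG z2 t))" .
  have "norm (integral {0..x} (\<lambda>t. (x - t) * (GG z1 t - GG z2 t)))
      \<le> integral {0..x} (\<lambda>t. R * LL * d * exp (kk * t))"
  proof (rule integral_norm_bound_integral)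
    show "(\<lambda>t. (x - t) * (GG z1 t - GG z2 t)) integrable_on {0..x}"
      using c1 by (auto intro!: integrable_continuous_real continuous_intros)
    show "(\<lambda>t. R * LL * d * exp (kk * t)) integrable_on {0..x}"
      by (auto intro!: integrable_continuous_real continuous_intros)
    fix t assume t: "t \<in> {0..x}"
    then have tR: "t \<in> {0..R}" using x by auto
    have "\<bar>GG z1 t - GG z2 t\<bar> \<le> LL * \<bar>exp (kk * t) * z1 t - exp (kk * t) * z2 t\<bar>"
      unfolding GG_def by (rule FF_lip[OF tR])
    also have "\<dots> = LL * exp (kk * t) * \<bar>z1 t - z2 t\<bar>"
    proof -
      have "exp (kk * t) * z1 t - exp (kk * t) * z2 t = exp (kk * t) * (z1 t - z2 t)"
        by (simp add: algebra_simps)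
      then show ?thesis by (simp add: abs_mult)
    qed
    also have "\<dots> \<le> LL * exp (kk * t) * d"
      using dist_bounded[of z1 t z2] LL3 unfolding d_def dist_real_def
      by (intro mult_left_mono) auto
    finally have A: "\<bar>GG z1 t - GG z2 t\<bar> \<le> LL * exp (kk * t) * d" .
    have B: "\<bar>x - t\<bar> \<le> R" using t x by auto
    have "norm ((x - t) * (GG z1 t - GG z2 t)) = \<bar>x - t\<bar> * \<bar>GG z1 t - GG z2 t\<bar>"
      by (simp add: abs_mult)
    also have "\<dots> \<le> R * (LL * exp (kk * t) * d)"
      using A B by (intro mult_mono) auto
    finally show "norm ((x - t) * (GG z1 t - GG z2 t)) \<le> R * LL * d * exp (kk * t)"
      by (simp add: algebra_simps)
  qed
  also have "\<dots> = R * LL * d * ((exp (kk * x) - 1) / kk)"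
    using expint[of x] x by simp
  finally show ?thesis using eq unfolding d_def by simp
qed

lemma contr: "dist (TT s z1) (TT s z2) \<le> 1/2 * dist z1 z2"
proof (rule dist_bound)
  fix x
  define y where "y = cl x"
  have y: "y \<in> {0..R}" unfolding y_def by (rule cl_in)
  define E where "E = exp (kk * y)"
  have E1: "1 \<le> E" unfolding E_def using kk_pos y by auto
  have Em: "exp (- (kk * y)) = 1 / E" unfolding E_def by (simp add: exp_minus field_simps)
  define Q where "Q = R * LL * dist z1 z2"
  have Q0: "0 \<le> Q" unfolding Q_def using R LL3 by auto
  have "dist (TT s z1 x) (TT s z2 x) = \<bar>HH s z1 y - HH s z2 y\<bar>"
    unfolding TT_app y_def dist_real_def ..
  also have "\<dots> = exp (- (kk * y)) * \<bar>integral {0..y} (\<lambda>t. (y - t) * GG z1 t) - integral {0..y} (\<lambda>t. (y - t) * GG z2 t)\<bar>"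
    unfolding HH_def by (simp add: abs_mult flip: right_diff_distrib)
  also have "\<dots> \<le> exp (- (kk * y)) * (Q * ((E - 1) / kk))"
    using VLip[OF y, of z1 z2] unfolding Q_def E_def by (intro mult_left_mono) auto
  also have "\<dots> = Q * (E - 1) / (E * kk)" unfolding Em by simp
  also have "\<dots> \<le> Q / kk"
    using E1 Q0 kk_pos by (simp add: divide_simps mult_left_mono)
  also have "\<dots> = 1/2 * dist z1 z2" unfolding Q_def kk_def using R LL3 by (simp add: field_simps)
  finally show "dist (TT s z1 x) (TT s z2 x) \<le> 1/2 * dist z1 z2" .
qed

lemma sdep: "dist (TT s z) (TT s' z) \<le> R * \<bar>s - s'\<bar>"
proof (rule dist_bound)
  fix x
  define y where "y = cl x"
  have y: "y \<in> {0..R}" unfolding y_def by (rule cl_in)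
  have e: "exp (- (kk * y)) \<le> 1" using kk_pos y by auto
  have "dist (TT s z x) (TT s' z x) = \<bar>HH s z y - HH s' z y\<bar>"
    unfolding TT_app y_def dist_real_def ..
  also have "\<dots> = exp (- (kk * y)) * (\<bar>s - s'\<bar> * y)"
  proof -
    have "HH s z y - HH s' z y = exp (- (kk * y)) * ((s - s') * y)"
      unfolding HH_def by (simp add: algebra_simps)
    then show ?thesis using y by (simp add: abs_mult)
  qed
  also have "\<dots> \<le> 1 * (\<bar>s - s'\<bar> * R)"
    using e y by (intro mult_mono mult_left_mono) auto
  finally show "dist (TT s z x) (TT s' z x) \<le> R * \<bar>s - s'\<bar>" by (simp add: mult.commute)
qed

definition "zs s = (THE z. TT s z = z)"

lemma zs_fix: "TT s (zs s) = zs s"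
proof -
  have "\<exists>!z. TT s z = z"
    by (rule banach_fix_type[of "1/2"]) (use contr in auto)
  then show ?thesis unfolding zs_def by (rule theI')
qed

lemma zs_lip: "dist (zs s) (zs s') \<le> 2 * R * \<bar>s - s'\<bar>"
proof -
  have "dist (zs s) (zs s') = dist (TT s (zs s)) (TT s' (zs s'))" using zs_fix by metis
  also have "\<dots> \<le> dist (TT s (zs s)) (TT s' (zs s)) + dist (TT s' (zs s)) (TT s' (zs s'))"
    by (rule dist_triangle)
  also have "\<dots> \<le> R * \<bar>s - s'\<bar> + 1/2 * dist (zs s) (zs s')"
    using sdep contr by (intro add_mono)
  finally show ?thesis by simp
qed

definition "gs s = exp (kk * R) * zs s R"

lemma gs_cont: "continuous_on UNIV gs"
proof (rule lipschitz_on_continuous_on)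
  show "(exp (kk * R) * (2 * R))-lipschitz_on UNIV gs"
  proof (rule lipschitz_onI)
    fix s s' :: real
    have "dist (gs s) (gs s') = exp (kk * R) * dist (zs s R) (zs s' R)"
      unfolding gs_def dist_real_def by (simp add: abs_mult flip: right_diff_distrib)
    also have "\<dots> \<le> exp (kk * R) * (2 * R * \<bar>s - s'\<bar>)"
      using dist_bounded[of "zs s" R "zs s'"] zs_lip[of s s'] by (intro mult_left_mono) auto
    finally show "dist (gs s) (gs s') \<le> exp (kk * R) * (2 * R) * dist s s'"
      by (simp add: dist_real_def)
    show "0 \<le> exp (kk * R) * (2 * R)" using R by auto
  qed
qed

definition "PP s x = a + s * x + integral {0..x} (\<lambda>t. (x - t) * GG (zs s) t)"

lemma PP_eq: assumes "x \<in> {0..R}" shows "exp (kk * x) * zs s x = PP s x"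
proof -
  have "apply_bcontfun (zs s) x = apply_bcontfun (TT s (zs s)) x" using zs_fix by metis
  also have "\<dots> = HH s (zs s) x" unfolding TT_app cl_id[OF assms] ..
  finally show ?thesis unfolding HH_def PP_def by (simp add: exp_minus field_simps)
qed

lemma gs_PP: "gs s = PP s R" unfolding gs_def using PP_eq[of R] R by auto

lemma int_bd: "\<bar>integral {0..R} (\<lambda>t. (R - t) * GG z t)\<bar> \<le> R * R * LL"
proof -
  have "norm (integral {0..R} (\<lambda>t. (R - t) * GG z t)) \<le> integral {0..R} (\<lambda>t. R * LL)"
  proof (rule integral_norm_bound_integral)
    show "(\<lambda>t. (R - t) * GG z t) integrable_on {0..R}"
      using GG_cont by (auto intro!: integrable_continuous_real continuous_intros)
    show "(\<lambda>t. R * LL) integrable_on {0..R}" by (intro integrable_continuous_real continuous_intros)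
    fix t assume t: "t \<in> {0..R}"
    have "norm ((R - t) * GG z t) = \<bar>R - t\<bar> * \<bar>GG z t\<bar>" by (simp add: abs_mult)
    also have "\<dots> \<le> R * LL" using t FF_bd[OF t] unfolding GG_def by (intro mult_mono) auto
    finally show "norm ((R - t) * GG z t) \<le> R * LL" .
  qed
  then show ?thesis using R by simp
qed

lemma shoot: "\<exists>s. gs s = a"
proof -
  have g1: "a \<le> gs (R * LL)" using int_bd[of "zs (R * LL)"] unfolding gs_PP PP_def by (auto simp: abs_le_iff algebra_simps)
  have g2: "gs (- (R * LL)) \<le> a" using int_bd[of "zs (- (R * LL))"] unfolding gs_PP PP_def by (auto simp: abs_le_iff algebra_simps)
  have "- (R * LL) \<le> R * LL" using R LL3 by auto
  from IVT'[of gs "- (R * LL)" a "R * LL", OF g2 g1 this] gs_cont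
  show ?thesis by (auto intro: continuous_on_subset)
qed

lemma exist:
  assumes a: "0 \<le> a" "a \<le> 1"
  shows "\<exists>\<psi> d\<psi>. (\<forall>x\<in>{0..R}. (\<psi> has_real_derivative d\<psi> x) (at x within {0..R})) \<and>
     (\<forall>x\<in>{0<..<R}. (d\<psi> has_real_derivative (- (\<psi> x * (1 - b * \<phi> x - \<psi> x)))) (at x)) \<and>
     (\<forall>x\<in>{0..R}. 0 \<le> \<psi> x \<and> \<psi> x \<le> 1) \<and> \<psi> 0 = a \<and> \<psi> R = a"
proof -
  obtain s where s: "gs s = a" using shoot by auto
  define g where "g = GG (zs s)"
  have gc: "continuous_on {0..R} g" unfolding g_def by (rule GG_cont)
  have tgc: "continuous_on {0..R} (\<lambda>t. t * g t)" using gc by (intro continuous_intros)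
  define \<psi> where "\<psi> x = a + s * x + x * integral {0..x} g - integral {0..x} (\<lambda>t. t * g t)" for x
  define d\<psi> where "d\<psi> x = s + integral {0..x} g" for x
  have psiP: "\<psi> x = PP s x" if "x \<in> {0..R}" for x
    unfolding \<psi>_def PP_def g_def using split_int[OF GG_cont that] by simp
  have gF: "g t = FF b \<phi> t (\<psi> t)" if "t \<in> {0..R}" for t
    unfolding g_def GG_def using PP_eq[OF that] psiP[OF that] by simp
  have i1: "((\<lambda>x. integral {0..x} g) has_real_derivative g x) (at x within {0..R})" if "x \<in> {0..R}" for x
    by (rule integral_has_real_derivative[OF gc that])
  have i2: "((\<lambda>x. integral {0..x} (\<lambda>t. t * g t)) has_real_derivative x * g x) (at x within {0..R})"
    if "x \<in> {0..R}" for x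
    by (rule integral_has_real_derivative[OF tgc that])
  have D1: "(\<psi> has_real_derivative d\<psi> x) (at x within {0..R})" if "x \<in> {0..R}" for x
    unfolding \<psi>_def d\<psi>_def by (auto intro!: derivative_eq_intros i1[OF that] i2[OF that])
  have D2: "(d\<psi> has_real_derivative FF b \<phi> x (\<psi> x)) (at x)" if "x \<in> {0<..<R}" for x
  proof -
    have "(d\<psi> has_real_derivative g x) (at x within {0..R})"
      unfolding d\<psi>_def using that by (auto intro!: derivative_eq_intros i1)
    then show ?thesis using that at_within_Icc_at[of 0 x R] gF[of x] by auto
  qed
  have E: "\<psi> 0 = a" "\<psi> R = a"
    unfolding \<psi>_def apply simp
    using psiP[of R] gs_PP[of s] s R unfolding \<psi>_def by auto
  have bd: "\<forall>x\<in>{0..R}. 0 \<le> \<psi> x \<and> \<psi> x \<le> 1"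
    by (rule maxp[OF R D1 D2 E(1) E(2) a phinn b]) auto
  have D2': "(d\<psi> has_real_derivative (- (\<psi> x * (1 - b * \<phi> x - \<psi> x)))) (at x)" if "x \<in> {0<..<R}" for x
  proof -
    have "cu (\<psi> x) = \<psi> x" using bd that by (intro cu_facts(4)) auto
    then show ?thesis using D2[OF that] unfolding FF_def by simp
  qed
  show ?thesis using D1 D2' bd E by blast
qed

end


theorem lemma3:
  fixes R \<epsilon> C :: real and \<phi> :: "real \<Rightarrow> real"
  assumes "R > pi" and "0 < \<epsilon>" and "\<epsilon> < 1" and "C > 0"
    and "continuous_on {0..R} \<phi>" and "\<phi> 0 = 0" and "\<phi> R = 0"
    and "\<forall>x\<in>{0<..<R}. \<phi> x > 0"
  shows "\<exists>b>1. (\<exists>\<psi> d\<psi>. is_sol R b \<phi> \<epsilon> \<psi> d\<psi>) \<and>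
           (\<forall>\<psi> d\<psi>. is_sol R b \<phi> \<epsilon> \<psi> d\<psi> \<longrightarrow>
              (\<forall>x\<in>{0<..<R}. \<psi> x < 1 - \<epsilon>) \<and> d\<psi> 0 < - C \<and> d\<psi> R > C)"
proof -
  note Rpi = assms(1) and e0 = assms(2) and e1 = assms(3) and C0 = assms(4)
    and phic = assms(5) and phi0 = assms(6) and phiR = assms(7) and phipos = assms(8)
  define a where "a = 1 - \<epsilon>"
  have a0: "0 < a" "a < 1" using e0 e1 unfolding a_def by auto
  have R0: "0 < R" using Rpi pi_gt3 by linarith
  define \<delta> where "\<delta> = min (R/4) (min (a/(8*C)) (a/8))"
  have d0: "0 < \<delta>" unfolding \<delta>_def using R0 a0 C0 by auto
  have d1: "4 * \<delta> \<le> R" unfolding \<delta>_def by auto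
  have d2: "2*C*\<delta> + 2*\<delta>^2 \<le> a/2"
  proof -
    have "\<delta> \<le> a/(8*C)" unfolding \<delta>_def by auto
    then have "C * \<delta> \<le> C * (a/(8*C))" using C0 by (intro mult_left_mono) auto
    then have A: "C * \<delta> \<le> a/8" using C0 by simp
    have "\<delta> \<le> a/8" unfolding \<delta>_def by auto
    then have "\<delta> * \<delta> \<le> (a/8) * 1" using d0 a0 by (intro mult_mono) auto
    then have B: "\<delta>^2 \<le> a/8" by (simp add: power2_eq_square)
    show ?thesis using A B by linarith
  qed
  have dR: "\<delta> \<le> R - \<delta>" using d1 d0 by auto
  obtain xm where xm: "xm \<in> {\<delta>..R-\<delta>}" "\<forall>y\<in>{\<delta>..R-\<delta>}. \<phi> xm \<le> \<phi> y"
    using continuous_attains_inf[of "{\<delta>..R-\<delta>}" \<phi>] dR continuous_on_subset[OF phic, of "{\<delta>..R-\<delta>}"] d0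
    by auto
  define m where "m = \<phi> xm"
  have m0: "0 < m" unfolding m_def using phipos xm(1) d0 by auto
  have mle: "\<forall>x\<in>{\<delta>..R-\<delta>}. m \<le> \<phi> x" using xm unfolding m_def by auto
  define K where "K = 4 * (2 + C*\<delta> + \<delta>^2) / (a * \<delta>^2)"
  have K0: "0 \<le> K" unfolding K_def using a0 d0 C0 by auto
  have Kin: "1 + C*\<delta> + \<delta>^2 < (a/2)*K*\<delta>^2/2"
  proof -
    have "(a/2)*K*\<delta>^2/2 = 2 + C*\<delta> + \<delta>^2" unfolding K_def using a0 d0 by (simp add: field_simps)
    then show ?thesis by simp
  qed
  define b where "b = (K + 2) / m + 2"
  have b1: "1 < b" unfolding b_def using K0 m0 by (auto intro: add_nonneg_pos)
  have bm: "K \<le> b * m - 1" unfolding b_def using m0 by (simp add: field_simps)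
  obtain xM where xM: "xM \<in> {0..R}" "\<forall>y\<in>{0..R}. \<phi> y \<le> \<phi> xM"
    using continuous_attains_sup[of "{0..R}" \<phi>] R0 phic by auto
  have phinn: "0 \<le> \<phi> t" if "t \<in> {0..R}" for t
    using that phi0 phiR phipos by (cases "t = 0 \<or> t = R") (auto intro: less_imp_le)
  have ex: "\<exists>\<psi> d\<psi>. is_sol R b \<phi> \<epsilon> \<psi> d\<psi>"
  proof -
    have "\<exists>\<psi> d\<psi>. (\<forall>x\<in>{0..R}. (\<psi> has_real_derivative d\<psi> x) (at x within {0..R})) \<and>
     (\<forall>x\<in>{0<..<R}. (d\<psi> has_real_derivative (- (\<psi> x * (1 - b * \<phi> x - \<psi> x)))) (at x)) \<and>
     (\<forall>x\<in>{0..R}. 0 \<le> \<psi> x \<and> \<psi> x \<le> 1) \<and> \<psi> 0 = a \<and> \<psi> R = a"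
      by (rule exist[of R b \<phi> "\<phi> xM" a]) (use R0 b1 phic phinn xM a0 in auto)
    then show ?thesis unfolding is_sol_def a_def by blast
  qed
  have pr: "(\<forall>x\<in>{0<..<R}. \<psi> x < 1 - \<epsilon>) \<and> d\<psi> 0 < - C \<and> d\<psi> R > C"
    if "is_sol R b \<phi> \<epsilon> \<psi> d\<psi>" for \<psi> d\<psi>
    by (rule props[OF that a_def a0(1) _ phipos d0 d1 d2 _ mle bm K0 Kin])
       (use b1 C0 in auto)
  show ?thesis using b1 ex pr by blast
qed

end
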